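(* For every $d\in(0,1]$, the competitive ratio of \textsc{Threshold} with parameter $d$ for the graph orientation problem with uniform query costs (even with an exact vertex cover algorithm in step 4, and with ties among optimal basic feasible LP solutions in step 2 broken in the worst way) is at least $\max\{1+d,\ 1/d\}$, and hence at least the golden ratio $\phi=(1+\sqrt5)/2$.
   Context: An instance of the graph orientation problem consists of a graph $G=(V,E)$ and, for each vertex $v$, a query cost $c_v$ and a continuous distribution $d_v$ with minimal support interval $I_v$; weights are independent and querying $v$ reveals $w_v$ at cost $c_v$. For a realization, $Q$ is a feasible query set if knowing $w_u$ for $u\in Q$ and only the intervals for unqueried vertices suffices to identify, for every edge, its endpoint of minimum weight; $\mathbb E[\mathrm{OPT}]$ is the expected minimum cost of a feasible query set. A vertex is mandatory if it belongs to every feasible query set; $p_v$ is the probability that $v$ is mandatory. Uniform costs means $c_v=1$. The competitive ratio of an algorithm is the supremum over instances of (expected query cost)/$\mathbb E[\mathrm{OPT}]$. Algorithm \textsc{Threshold} with parameter $d$: (1) $M=\{v:p_v\ge d\}$; (2) compute an optimal basic feasible solution $x^*$ of the LP $\min\sum c_vx_v$ s.t. $x_u+x_v\ge1$ for every edge of $G[V\setminus M]$, $x\ge0$; (3) let $V_1,V_{1/2},V_0$ be the vertices of $V\setminus M$ with $x^*_v=1,\frac12,0$; (4) compute a vertex cover $VC'$ of $G[V_{1/2}]$; (5) query $Q=M\cup V_1\cup VC'$; (6) query every vertex of $V\setminus Q$ that is mandatory. *)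

theory Defs
  imports "HOL-Probability.Probability"
begin

text \<open>Instances: vertices are natural numbers, V a finite vertex set, E a set of
  2-element edges, D v the (absolutely continuous) distribution of w_v. Uniform costs.\<close>

definition support_interval :: "real measure \<Rightarrow> real set" where
  "support_interval \<mu> = {x. measure \<mu> {..<x} > 0 \<and> measure \<mu> {x<..} > 0}"

definition simple_graph :: "nat set \<Rightarrow> nat set set \<Rightarrow> bool" where
  "simple_graph V E \<longleftrightarrow> finite V \<and> (\<forall>e\<in>E. \<exists>u v. e = {u, v} \<and> u \<noteq> v \<and> u \<in> V \<and> v \<in> V)"

definition wf_instance :: "nat set \<Rightarrow> nat set set \<Rightarrow> (nat \<Rightarrow> real measure) \<Rightarrow> bool" where
  "wf_instance V E D \<longleftrightarrow> simple_graph V E \<and>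
     (\<forall>v\<in>V. prob_space (D v) \<and>
        (\<exists>f. f \<in> borel_measurable borel \<and> (\<forall>x. f x \<ge> 0) \<and>
             D v = density lborel (\<lambda>x. ennreal (f x)))) \<and>
     (\<forall>u v. {u, v} \<in> E \<longrightarrow> u \<noteq> v \<longrightarrow>
        support_interval (D u) \<inter> support_interval (D v) \<noteq> {})"

definition consistent :: "nat set \<Rightarrow> (nat \<Rightarrow> real measure) \<Rightarrow> (nat \<Rightarrow> real) \<Rightarrow> nat set
    \<Rightarrow> (nat \<Rightarrow> real) \<Rightarrow> bool" where
  "consistent V D w Q w' \<longleftrightarrow> (\<forall>x\<in>Q. w' x = w x) \<and>
     (\<forall>x\<in>V - Q. w' x \<in> support_interval (D x))"

definition feasible_query :: "nat set \<Rightarrow> nat set set \<Rightarrow> (nat \<Rightarrow> real measure) \<Rightarrow> (nat \<Rightarrow> real)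
    \<Rightarrow> nat set \<Rightarrow> bool" where
  "feasible_query V E D w Q \<longleftrightarrow> Q \<subseteq> V \<and>
     (\<forall>u v. {u, v} \<in> E \<longrightarrow> u \<noteq> v \<longrightarrow>
        (\<exists>a b. {a, b} = {u, v} \<and> (\<forall>w'. consistent V D w Q w' \<longrightarrow> w' a \<le> w' b)))"

definition opt_cost :: "nat set \<Rightarrow> nat set set \<Rightarrow> (nat \<Rightarrow> real measure) \<Rightarrow> (nat \<Rightarrow> real) \<Rightarrow> nat" where
  "opt_cost V E D w = Min (card ` {Q. feasible_query V E D w Q})"

definition mandatory :: "nat set \<Rightarrow> nat set set \<Rightarrow> (nat \<Rightarrow> real measure) \<Rightarrow> (nat \<Rightarrow> real)
    \<Rightarrow> nat \<Rightarrow> bool" where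
  "mandatory V E D w v \<longleftrightarrow> (\<forall>Q. feasible_query V E D w Q \<longrightarrow> v \<in> Q)"

definition realizations :: "nat set \<Rightarrow> (nat \<Rightarrow> real measure) \<Rightarrow> (nat \<Rightarrow> real) measure" where
  "realizations V D = PiM V D"

definition expected_opt :: "nat set \<Rightarrow> nat set set \<Rightarrow> (nat \<Rightarrow> real measure) \<Rightarrow> real" where
  "expected_opt V E D = (\<integral>w. real (opt_cost V E D w) \<partial>realizations V D)"

definition mand_prob :: "nat set \<Rightarrow> nat set set \<Rightarrow> (nat \<Rightarrow> real measure) \<Rightarrow> nat \<Rightarrow> real" where
  "mand_prob V E D v = measure (realizations V D)
      {w \<in> space (realizations V D). mandatory V E D w v}"

definition lp_feasible :: "nat set \<Rightarrow> nat set set \<Rightarrow> (nat \<Rightarrow> real) \<Rightarrow> bool" where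
  "lp_feasible W F x \<longleftrightarrow> (\<forall>v. v \<notin> W \<longrightarrow> x v = 0) \<and> (\<forall>v\<in>W. x v \<ge> 0) \<and>
     (\<forall>u v. {u, v} \<in> F \<longrightarrow> u \<noteq> v \<longrightarrow> x u + x v \<ge> 1)"

text \<open>Basic solution: x is the unique solution of its active constraints taken as equalities.\<close>
definition lp_basic :: "nat set \<Rightarrow> nat set set \<Rightarrow> (nat \<Rightarrow> real) \<Rightarrow> bool" where
  "lp_basic W F x \<longleftrightarrow> (\<forall>y. ((\<forall>v. v \<notin> W \<longrightarrow> y v = 0) \<and>
       (\<forall>v\<in>W. x v = 0 \<longrightarrow> y v = 0) \<and>
       (\<forall>u v. {u, v} \<in> F \<longrightarrow> u \<noteq> v \<longrightarrow> x u + x v = 1 \<longrightarrow> y u + y v = 1)) \<longrightarrow> y = x)"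

definition lp_optimal_bfs :: "nat set \<Rightarrow> nat set set \<Rightarrow> (nat \<Rightarrow> real) \<Rightarrow> bool" where
  "lp_optimal_bfs W F x \<longleftrightarrow> lp_feasible W F x \<and> lp_basic W F x \<and>
     (\<forall>y. lp_feasible W F y \<longrightarrow> (\<Sum>v\<in>W. x v) \<le> (\<Sum>v\<in>W. y v))"

definition induced_edges :: "nat set set \<Rightarrow> nat set \<Rightarrow> nat set set" where
  "induced_edges E W = {e \<in> E. e \<subseteq> W}"

definition is_vertex_cover :: "nat set \<Rightarrow> nat set set \<Rightarrow> nat set \<Rightarrow> bool" where
  "is_vertex_cover W F C \<longleftrightarrow> C \<subseteq> W \<and> (\<forall>e\<in>F. e \<inter> C \<noteq> {})"

definition is_min_vertex_cover :: "nat set \<Rightarrow> nat set set \<Rightarrow> nat set \<Rightarrow> bool" where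
  "is_min_vertex_cover W F C \<longleftrightarrow> is_vertex_cover W F C \<and>
     (\<forall>C'. is_vertex_cover W F C' \<longrightarrow> card C \<le> card C')"

definition exact_vc_alg :: "(nat set \<Rightarrow> nat set set \<Rightarrow> nat set) \<Rightarrow> bool" where
  "exact_vc_alg vc \<longleftrightarrow> (\<forall>W F. simple_graph W F \<longrightarrow> is_min_vertex_cover W F (vc W F))"

definition thr_M :: "real \<Rightarrow> nat set \<Rightarrow> nat set set \<Rightarrow> (nat \<Rightarrow> real measure) \<Rightarrow> nat set" where
  "thr_M d V E D = {v \<in> V. mand_prob V E D v \<ge> d}"

definition thr_Q :: "(nat set \<Rightarrow> nat set set \<Rightarrow> nat set) \<Rightarrow> real \<Rightarrow> nat set \<Rightarrow> nat set set
    \<Rightarrow> (nat \<Rightarrow> real measure) \<Rightarrow> (nat \<Rightarrow> real) \<Rightarrow> nat set" where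
  "thr_Q vc d V E D x =
     (let M = thr_M d V E D; W = V - M;
          V1 = {v \<in> W. x v = 1}; Vh = {v \<in> W. x v = 1/2}
      in M \<union> V1 \<union> vc Vh (induced_edges E Vh))"

definition thr_expected_cost :: "(nat set \<Rightarrow> nat set set \<Rightarrow> nat set) \<Rightarrow> real \<Rightarrow> nat set
    \<Rightarrow> nat set set \<Rightarrow> (nat \<Rightarrow> real measure) \<Rightarrow> (nat \<Rightarrow> real) \<Rightarrow> real" where
  "thr_expected_cost vc d V E D x =
     (let Q = thr_Q vc d V E D x in
      \<integral>w. real (card Q + card {v \<in> V - Q. mandatory V E D w v}) \<partial>realizations V D)"

definition threshold_ratio :: "(nat set \<Rightarrow> nat set set \<Rightarrow> nat set) \<Rightarrow> real \<Rightarrow> ereal" where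
  "threshold_ratio vc d = Sup {ereal (thr_expected_cost vc d V E D x / expected_opt V E D) | V E D x.
       wf_instance V E D \<and> expected_opt V E D > 0 \<and>
       lp_optimal_bfs (V - thr_M d V E D) (induced_edges E (V - thr_M d V E D)) x}"

end

theory Submission
  imports Defs
begin


definition f2 :: "real \<Rightarrow> real \<Rightarrow> real \<Rightarrow> real \<Rightarrow> real" where
  "f2 a s t x = a * indicator {s..s+1} x + (1-a) * indicator {t..t+1} x"

definition D2 :: "real \<Rightarrow> real \<Rightarrow> real \<Rightarrow> real measure" where
  "D2 a s t = density lborel (\<lambda>x. ennreal (f2 a s t x))"

lemma f2_meas[measurable]: "f2 a s t \<in> borel_measurable borel"
  unfolding f2_def by measurable

lemma f2_nonneg: "0 \<le> a \<Longrightarrow> a \<le> 1 \<Longrightarrow> f2 a s t x \<ge> 0"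
  unfolding f2_def by (auto simp: indicator_def)

lemma emeasure_D2:
  assumes "0 \<le> a" "a \<le> 1" "B \<in> sets borel"
  shows "emeasure (D2 a s t) B = ennreal a * emeasure lborel ({s..s+1} \<inter> B)
          + ennreal (1-a) * emeasure lborel ({t..t+1} \<inter> B)"
proof -
  have "emeasure (D2 a s t) B = (\<integral>\<^sup>+ x. ennreal (f2 a s t x) * indicator B x \<partial>lborel)"
    unfolding D2_def using assms by (subst emeasure_density) auto
  also have "\<dots> = (\<integral>\<^sup>+ x. ennreal a * indicator ({s..s+1} \<inter> B) x
        + ennreal (1-a) * indicator ({t..t+1} \<inter> B) x \<partial>lborel)"
    using assms by (intro nn_integral_cong) (auto simp: f2_def indicator_def ennreal_mult)
  also have "\<dots> = ennreal a * emeasure lborel ({s..s+1} \<inter> B)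
          + ennreal (1-a) * emeasure lborel ({t..t+1} \<inter> B)"
    using assms by (subst nn_integral_add) (auto simp: nn_integral_cmult_indicator)
  finally show ?thesis .
qed

lemma prob_D2: assumes "0 \<le> a" "a \<le> 1" "s + 1 \<le> t" shows "prob_space (D2 a s t)"
proof
  have "{s..s+1} \<inter> space (D2 a s t) = {s..s+1}" "{t..t+1} \<inter> space (D2 a s t) = {t..t+1}"
    by (auto simp: D2_def)
  then show "emeasure (D2 a s t) (space (D2 a s t)) = 1"
    using assms by (subst emeasure_D2) (auto simp: D2_def simp flip: ennreal_plus)
qed



lemma ee: "prob_space M \<Longrightarrow> emeasure M A = ennreal (measure M A)"
  by (rule finite_measure.emeasure_eq_measure[OF prob_space.finite_measure])

lemma measure_pos_iff: "prob_space M \<Longrightarrow> measure M A > 0 \<longleftrightarrow> emeasure M A > 0"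
  by (simp add: ee)

lemma supp_D2:
  assumes a: "0 < a" "a < 1" and st: "s + 1 \<le> t"
  shows "support_interval (D2 a s t) = {s<..<t+1}"
proof -
  have P: "prob_space (D2 a s t)" using prob_D2[of a s t] a st by auto
  have lo: "emeasure (D2 a s t) {..<x} > 0 \<longleftrightarrow> s < x" for x
  proof
    assume "s < x"
    have "0 < ennreal a * emeasure lborel {s<..<min (s+1) x}"
      using a \<open>s < x\<close> by (simp add: ennreal_zero_less_mult_iff)
    also have "\<dots> \<le> ennreal a * emeasure lborel ({s..s+1} \<inter> {..<x})"
      by (intro mult_left_mono emeasure_mono) auto
    also have "\<dots> \<le> emeasure (D2 a s t) {..<x}"
      using a by (subst emeasure_D2) auto
    finally show "emeasure (D2 a s t) {..<x} > 0" .
  next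
    assume "emeasure (D2 a s t) {..<x} > 0"
    moreover have "x \<le> s \<Longrightarrow> emeasure (D2 a s t) {..<x} = 0"
    proof -
      assume "x \<le> s"
      then have "{s..s+1} \<inter> {..<x} = {}" "{t..t+1} \<inter> {..<x} = {}" using st by auto
      then show ?thesis using a by (simp add: emeasure_D2)
    qed
    ultimately show "s < x" by force
  qed
  have hi: "emeasure (D2 a s t) {x<..} > 0 \<longleftrightarrow> x < t + 1" for x
  proof
    assume "x < t + 1"
    have "0 < ennreal (1-a) * emeasure lborel {max t x<..<t+1}"
      using a \<open>x < t+1\<close> by (simp add: ennreal_zero_less_mult_iff)
    also have "\<dots> \<le> ennreal (1-a) * emeasure lborel ({t..t+1} \<inter> {x<..})"
      by (intro mult_left_mono emeasure_mono) auto
    also have "\<dots> \<le> emeasure (D2 a s t) {x<..}"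
      using a by (subst emeasure_D2) auto
    finally show "emeasure (D2 a s t) {x<..} > 0" .
  next
    assume "emeasure (D2 a s t) {x<..} > 0"
    moreover have "x \<ge> t + 1 \<Longrightarrow> emeasure (D2 a s t) {x<..} = 0"
    proof -
      assume "x \<ge> t + 1"
      then have "{s..s+1} \<inter> {x<..} = {}" "{t..t+1} \<inter> {x<..} = {}" using st by auto
      then show ?thesis using a by (simp add: emeasure_D2)
    qed
    ultimately show "x < t + 1" by force
  qed
  show ?thesis unfolding support_interval_def
    using lo hi measure_pos_iff[OF P] by auto
qed

definition DC :: "real \<Rightarrow> real measure" where "DC a = D2 a 0 2"
definition DL :: "real \<Rightarrow> real measure" where "DL a = D2 a 2 4"
definition IC :: "real set" where "IC = {0<..<3}"
definition IL :: "real set" where "IL = {2<..<5}"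

lemma supp_DC: "0 < a \<Longrightarrow> a < 1 \<Longrightarrow> support_interval (DC a) = IC"
  unfolding DC_def IC_def by (subst supp_D2) auto
lemma supp_DL: "0 < a \<Longrightarrow> a < 1 \<Longrightarrow> support_interval (DL a) = IL"
  unfolding DL_def IL_def by (subst supp_D2) auto

lemma prob_DC: "0 < a \<Longrightarrow> a < 1 \<Longrightarrow> measure (DC a) IL = 1 - a"
proof -
  assume a: "0 < a" "a < 1"
  have e1: "{0..1} \<inter> {2<..<5} = ({}::real set)" "{2..3} \<inter> {2<..<5} = {2<..(3::real)}" by auto
  have "emeasure (DC a) IL = ennreal (1 - a)"
    unfolding DC_def using a
    by (subst emeasure_D2) (auto simp: e1 IL_def simp del: greaterThanLessThan_iff)
  moreover have "prob_space (DC a)" unfolding DC_def using a by (intro prob_D2) auto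
  ultimately show ?thesis using a by (simp add: ee)
qed

lemma prob_DL: "0 < a \<Longrightarrow> a < 1 \<Longrightarrow> measure (DL a) IC = a"
proof -
  assume a: "0 < a" "a < 1"
  have e1: "{4..5} \<inter> {0<..<3} = ({}::real set)" "{2..3} \<inter> {0<..<3} = {2..<(3::real)}" by auto
  have "emeasure (DL a) IC = ennreal a"
    unfolding DL_def using a
    by (subst emeasure_D2) (auto simp: e1 IC_def simp del: greaterThanLessThan_iff)
  moreover have "prob_space (DL a)" unfolding DL_def using a by (intro prob_D2) auto
  ultimately show ?thesis using a by (simp add: ee)
qed

lemma prob_space_DC: "0 < a \<Longrightarrow> a < 1 \<Longrightarrow> prob_space (DC a)"
  unfolding DC_def by (intro prob_D2) auto
lemma prob_space_DL: "0 < a \<Longrightarrow> a < 1 \<Longrightarrow> prob_space (DL a)"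
  unfolding DL_def by (intro prob_D2) auto



definition Vs :: "nat \<Rightarrow> nat set" where "Vs k = {0..k}"
definition Es :: "nat \<Rightarrow> nat set set" where "Es k = (\<lambda>i. {0,i}) ` {1..k}"
definition Ds :: "real \<Rightarrow> real \<Rightarrow> nat \<Rightarrow> real measure" where
  "Ds a b i = (if i = 0 then DC a else DL b)"

definition ok :: "(nat \<Rightarrow> real) \<Rightarrow> nat set \<Rightarrow> nat \<Rightarrow> bool" where
  "ok w Q i \<longleftrightarrow> (0 \<in> Q \<and> i \<in> Q) \<or> (0 \<in> Q \<and> w 0 \<notin> IL) \<or> (i \<in> Q \<and> w i \<notin> IC)"

locale star =
  fixes a b :: real and k :: nat
  assumes a: "0 < a" "a < 1" and b: "0 < b" "b < 1" and k: "1 \<le> k"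
begin

lemma supp_Ds: "support_interval (Ds a b i) = (if i = 0 then IC else IL)"
  using a b by (simp add: Ds_def supp_DC supp_DL)

definition mk :: "(nat \<Rightarrow> real) \<Rightarrow> nat set \<Rightarrow> real \<Rightarrow> real \<Rightarrow> nat \<Rightarrow> real" where
  "mk w Q c0 c1 = (\<lambda>x. if x \<in> Q then w x else if x = 0 then c0 else c1)"

lemma cons_mk: "c0 \<in> IC \<Longrightarrow> c1 \<in> IL \<Longrightarrow> consistent (Vs k) (Ds a b) w Q (mk w Q c0 c1)"
  unfolding consistent_def mk_def by (auto simp: supp_Ds)

lemma cv_in: "consistent (Vs k) (Ds a b) w Q w' \<Longrightarrow> x \<in> Q \<Longrightarrow> w' x = w x"
  unfolding consistent_def by auto
lemma cv0: "consistent (Vs k) (Ds a b) w Q w' \<Longrightarrow> 0 \<notin> Q \<Longrightarrow> w' 0 \<in> IC"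
  unfolding consistent_def by (auto simp: supp_Ds Vs_def dest!: bspec[of _ _ 0])
lemma cvi: "consistent (Vs k) (Ds a b) w Q w' \<Longrightarrow> i \<in> {1..k} \<Longrightarrow> i \<notin> Q \<Longrightarrow> w' i \<in> IL"
  unfolding consistent_def by (auto simp: supp_Ds Vs_def dest!: bspec[of _ _ i])

lemma cons_val: "consistent (Vs k) (Ds a b) w Q w' \<Longrightarrow> x \<in> Vs k \<Longrightarrow>
   (x \<in> Q \<longrightarrow> w' x = w x) \<and> (x \<notin> Q \<longrightarrow> w' x \<in> (if x = 0 then IC else IL))"
  unfolding consistent_def by (auto simp: supp_Ds)

lemma res_iff:
  assumes i: "i \<in> {1..k}"
  shows "(\<exists>x y. {x,y} = {0,i} \<and> (\<forall>w'. consistent (Vs k) (Ds a b) w Q w' \<longrightarrow> w' x \<le> w' y))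
     \<longleftrightarrow> ok w Q i"
proof
  have i0: "i \<noteq> 0" "i \<in> Vs k" "0 \<in> Vs k" using i by (auto simp: Vs_def)
  assume "ok w Q i"
  then consider "0 \<in> Q" "i \<in> Q" | "0 \<in> Q" "i \<notin> Q" "w 0 \<notin> IL" | "0 \<notin> Q" "i \<in> Q" "w i \<notin> IC"
    unfolding ok_def by blast
  then show "\<exists>x y. {x,y} = {0,i} \<and> (\<forall>w'. consistent (Vs k) (Ds a b) w Q w' \<longrightarrow> w' x \<le> w' y)"
  proof cases
    case 1
    show ?thesis
    proof (cases "w 0 \<le> w i")
      case True
      show ?thesis proof (rule exI[of _ 0], rule exI[of _ i], intro conjI refl allI impI)
          fix w' assume c: "consistent (Vs k) (Ds a b) w Q w'"
          have "w' i = w i" "w' 0 = w 0" using cv_in[OF c] 1 by simp_all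
          then show "w' 0 \<le> w' i" using True by simp
        qed
    next
      case False
      show ?thesis proof (rule exI[of _ i], rule exI[of _ 0], intro conjI insert_commute allI impI)
          fix w' assume c: "consistent (Vs k) (Ds a b) w Q w'"
          have "w' i = w i" "w' 0 = w 0" using cv_in[OF c] 1 by simp_all
          then show "w' i \<le> w' 0" using False by simp
        qed
    qed
  next
    case 2
    show ?thesis
    proof (cases "w 0 \<le> 2")
      case True
      show ?thesis proof (rule exI[of _ 0], rule exI[of _ i], intro conjI refl allI impI)
          fix w' assume c: "consistent (Vs k) (Ds a b) w Q w'"
          have "w' 0 = w 0" using cv_in[OF c] 2 by simp
          moreover have "w' i \<in> IL" using cvi[OF c i] 2 by simp
          ultimately have "w' 0 = w 0" "w' i \<in> IL" by auto
          then show "w' 0 \<le> w' i" using True by (auto simp: IL_def)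
        qed
    next
      case False
      then have "w 0 \<ge> 5" using 2 by (auto simp: IL_def)
      show ?thesis proof (rule exI[of _ i], rule exI[of _ 0], intro conjI insert_commute allI impI)
          fix w' assume c: "consistent (Vs k) (Ds a b) w Q w'"
          have "w' 0 = w 0" using cv_in[OF c] 2 by simp
          moreover have "w' i \<in> IL" using cvi[OF c i] 2 by simp
          ultimately have "w' 0 = w 0" "w' i \<in> IL" by auto
          then show "w' i \<le> w' 0" using \<open>w 0 \<ge> 5\<close> by (auto simp: IL_def)
        qed
    qed
  next
    case 3
    show ?thesis
    proof (cases "w i \<le> 0")
      case True
      show ?thesis proof (rule exI[of _ i], rule exI[of _ 0], intro conjI insert_commute allI impI)
          fix w' assume c: "consistent (Vs k) (Ds a b) w Q w'"
          have "w' i = w i" using cv_in[OF c] 3 by simp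
          moreover have "w' 0 \<in> IC" using cv0[OF c] 3 by simp
          ultimately have "w' i = w i" "w' 0 \<in> IC" by auto
          then show "w' i \<le> w' 0" using True by (auto simp: IC_def)
        qed
    next
      case False
      then have "w i \<ge> 3" using 3 by (auto simp: IC_def)
      show ?thesis proof (rule exI[of _ 0], rule exI[of _ i], intro conjI refl allI impI)
          fix w' assume c: "consistent (Vs k) (Ds a b) w Q w'"
          have "w' i = w i" using cv_in[OF c] 3 by simp
          moreover have "w' 0 \<in> IC" using cv0[OF c] 3 by simp
          ultimately have "w' i = w i" "w' 0 \<in> IC" by auto
          then show "w' 0 \<le> w' i" using \<open>w i \<ge> 3\<close> by (auto simp: IC_def)
        qed
    qed
  qed
next
  have i0: "i \<noteq> 0" using i by auto
  assume ex: "\<exists>x y. {x,y} = {0,i} \<and> (\<forall>w'. consistent (Vs k) (Ds a b) w Q w' \<longrightarrow> w' x \<le> w' y)"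
  show "ok w Q i"
  proof (rule ccontr)
    assume nok: "\<not> ok w Q i"
    have viol: "\<exists>w'. consistent (Vs k) (Ds a b) w Q w' \<and> w' y < w' x" if "{x,y} = {0,i}" for x y
    proof -
      from that i0 have xy: "(x = 0 \<and> y = i) \<or> (x = i \<and> y = 0)" by (auto simp: doubleton_eq_iff)
      consider "0 \<notin> Q" "i \<notin> Q" | "0 \<in> Q" "i \<notin> Q" "w 0 \<in> IL" | "0 \<notin> Q" "i \<in> Q" "w i \<in> IC"
        using nok unfolding ok_def by blast
      then show ?thesis
      proof cases
        case 1
        have c: "consistent (Vs k) (Ds a b) w Q (mk w Q 2.75 2.25)"
             "consistent (Vs k) (Ds a b) w Q (mk w Q 2.25 2.75)"
          by (auto intro!: cons_mk simp: IC_def IL_def)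
        show ?thesis using xy
        proof
          assume "x = 0 \<and> y = i" then show ?thesis using c 1 i0 by (intro exI[of _ "mk w Q 2.75 2.25"]) (auto simp: mk_def)
        next
          assume "x = i \<and> y = 0" then show ?thesis using c 1 i0 by (intro exI[of _ "mk w Q 2.25 2.75"]) (auto simp: mk_def)
        qed
      next
        case 2
        have c: "consistent (Vs k) (Ds a b) w Q (mk w Q 1 ((2 + w 0)/2))"
             "consistent (Vs k) (Ds a b) w Q (mk w Q 1 ((5 + w 0)/2))"
          using 2 by (auto intro!: cons_mk simp: IC_def IL_def)
        show ?thesis using xy
        proof
          assume "x = 0 \<and> y = i" then show ?thesis using c 2 i0
            by (intro exI[of _ "mk w Q 1 ((2 + w 0)/2)"]) (auto simp: mk_def IL_def)
        next
          assume "x = i \<and> y = 0" then show ?thesis using c 2 i0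
            by (intro exI[of _ "mk w Q 1 ((5 + w 0)/2)"]) (auto simp: mk_def IL_def)
        qed
      next
        case 3
        have c: "consistent (Vs k) (Ds a b) w Q (mk w Q ((3 + w i)/2) 3)"
             "consistent (Vs k) (Ds a b) w Q (mk w Q (w i / 2) 3)"
          using 3 by (auto intro!: cons_mk simp: IC_def IL_def)
        show ?thesis using xy
        proof
          assume "x = 0 \<and> y = i" then show ?thesis using c 3 i0
            by (intro exI[of _ "mk w Q ((3 + w i)/2) 3"]) (auto simp: mk_def IC_def)
        next
          assume "x = i \<and> y = 0" then show ?thesis using c 3 i0
            by (intro exI[of _ "mk w Q (w i / 2) 3"]) (auto simp: mk_def IC_def)
        qed
      qed
    qed
    from ex obtain x y where "{x,y} = {0,i}" and le: "\<forall>w'. consistent (Vs k) (Ds a b) w Q w' \<longrightarrow> w' x \<le> w' y"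
      by blast
    with viol[of x y] show False by force
  qed
qed

lemma edge_iff: "{u,v} \<in> Es k \<and> u \<noteq> v \<longleftrightarrow> (\<exists>i\<in>{1..k}. {u,v} = {0,i})"
proof
  assume "{u,v} \<in> Es k \<and> u \<noteq> v"
  then obtain i where "i \<in> {1..k}" "{u,v} = {0,i}" unfolding Es_def by blast
  then show "\<exists>i\<in>{1..k}. {u,v} = {0,i}" by blast
next
  assume "\<exists>i\<in>{1..k}. {u,v} = {0,i}"
  then obtain i where i: "i \<in> {1..k}" "{u,v} = {0,i}" by blast
  have "u \<noteq> v"
  proof
    assume "u = v"
    then have "{0,i} = {u}" using i(2) by simp
    then have "0 \<in> {u}" "i \<in> {u}" by (blast, blast)
    then show False using i(1) by simp
  qed
  moreover have "{u,v} \<in> Es k" unfolding Es_def i(2) using i(1) by (rule imageI)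
  ultimately show "{u,v} \<in> Es k \<and> u \<noteq> v" by simp
qed

lemma feasible_iff:
  "feasible_query (Vs k) (Es k) (Ds a b) w Q \<longleftrightarrow> Q \<subseteq> Vs k \<and> (\<forall>i\<in>{1..k}. ok w Q i)"
proof -
  have "(\<forall>u v. {u, v} \<in> Es k \<longrightarrow> u \<noteq> v \<longrightarrow>
        (\<exists>x y. {x, y} = {u, v} \<and> (\<forall>w'. consistent (Vs k) (Ds a b) w Q w' \<longrightarrow> w' x \<le> w' y)))
      \<longleftrightarrow> (\<forall>i\<in>{1..k}. ok w Q i)"
  proof
    assume H: "\<forall>u v. {u, v} \<in> Es k \<longrightarrow> u \<noteq> v \<longrightarrow>
        (\<exists>x y. {x, y} = {u, v} \<and> (\<forall>w'. consistent (Vs k) (Ds a b) w Q w' \<longrightarrow> w' x \<le> w' y))"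
    show "\<forall>i\<in>{1..k}. ok w Q i"
    proof
      fix i assume i: "i \<in> {1..k}"
      have e1: "{0,i} \<in> Es k" unfolding Es_def using i by (rule imageI)
      have e2: "(0::nat) \<noteq> i" using i by simp
      have "\<exists>x y. {x, y} = {0, i} \<and> (\<forall>w'. consistent (Vs k) (Ds a b) w Q w' \<longrightarrow> w' x \<le> w' y)"
        by (rule H[rule_format, OF e1 e2])
      then show "ok w Q i" using res_iff[OF i] by (rule iffD1[rotated])
    qed
  next
    assume H: "\<forall>i\<in>{1..k}. ok w Q i"
    show "\<forall>u v. {u, v} \<in> Es k \<longrightarrow> u \<noteq> v \<longrightarrow>
        (\<exists>x y. {x, y} = {u, v} \<and> (\<forall>w'. consistent (Vs k) (Ds a b) w Q w' \<longrightarrow> w' x \<le> w' y))"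
    proof (intro allI impI)
      fix u v assume "{u,v} \<in> Es k" "u \<noteq> v"
      then obtain i where i: "i \<in> {1..k}" and e: "{u,v} = {0,i}" using edge_iff by blast
      show "\<exists>x y. {x, y} = {u, v} \<and> (\<forall>w'. consistent (Vs k) (Ds a b) w Q w' \<longrightarrow> w' x \<le> w' y)"
        unfolding e by (rule res_iff[OF i, THEN iffD2]) (use H i in blast)
    qed
  qed
  then show ?thesis unfolding feasible_query_def by (simp only:)
qed

end


context star begin

lemma ok1: "ok w Q i \<Longrightarrow> w 0 \<in> IL \<Longrightarrow> i \<in> Q"
  unfolding ok_def by blast
lemma ok2: "ok w Q i \<Longrightarrow> w i \<in> IC \<Longrightarrow> 0 \<in> Q"
  unfolding ok_def by blast

lemma feasD: "feasible_query (Vs k) (Es k) (Ds a b) w Q \<Longrightarrow> i \<in> {1..k} \<Longrightarrow> ok w Q i"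
  using feasible_iff by blast
lemma feasD2: "feasible_query (Vs k) (Es k) (Ds a b) w Q \<Longrightarrow> Q \<subseteq> Vs k"
  using feasible_iff by blast

lemma feas0: "w 0 \<notin> IL \<Longrightarrow> feasible_query (Vs k) (Es k) (Ds a b) w {0}"
  unfolding feasible_iff ok_def by (auto simp: Vs_def)
lemma feasL: "\<forall>i\<in>{1..k}. w i \<notin> IC \<Longrightarrow> feasible_query (Vs k) (Es k) (Ds a b) w {1..k}"
  unfolding feasible_iff ok_def by (auto simp: Vs_def)
lemma feasV: "feasible_query (Vs k) (Es k) (Ds a b) w (Vs k)"
  unfolding feasible_iff ok_def by (auto simp: Vs_def)

lemma mand_leaf:
  assumes j: "j \<in> {1..k}"
  shows "mandatory (Vs k) (Es k) (Ds a b) w j \<longleftrightarrow> w 0 \<in> IL"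
proof
  assume m: "mandatory (Vs k) (Es k) (Ds a b) w j"
  show "w 0 \<in> IL"
  proof (rule ccontr)
    assume "w 0 \<notin> IL"
    then have "j \<in> {0}" using m feas0 unfolding mandatory_def by blast
    then show False using j by simp
  qed
next
  assume "w 0 \<in> IL"
  then show "mandatory (Vs k) (Es k) (Ds a b) w j"
    unfolding mandatory_def using feasD[OF _ j] ok1 by blast
qed

lemma mand_center:
  "mandatory (Vs k) (Es k) (Ds a b) w 0 \<longleftrightarrow> (\<exists>i\<in>{1..k}. w i \<in> IC)"
proof
  assume m: "mandatory (Vs k) (Es k) (Ds a b) w 0"
  show "\<exists>i\<in>{1..k}. w i \<in> IC"
  proof (rule ccontr)
    assume "\<not> (\<exists>i\<in>{1..k}. w i \<in> IC)"
    then have "(0::nat) \<in> {1..k}" using m feasL unfolding mandatory_def by blast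
    then show False by simp
  qed
next
  assume "\<exists>i\<in>{1..k}. w i \<in> IC"
  then obtain i where i: "i \<in> {1..k}" "w i \<in> IC" by blast
  show "mandatory (Vs k) (Es k) (Ds a b) w 0"
    unfolding mandatory_def using feasD[OF _ i(1)] ok2 i(2) by blast
qed

definition optf :: "(nat \<Rightarrow> real) \<Rightarrow> nat" where
  "optf w = (if w 0 \<in> IL then (if \<exists>i\<in>{1..k}. w i \<in> IC then k + 1 else k) else 1)"

lemma opt_eq: "opt_cost (Vs k) (Es k) (Ds a b) w = optf w"
  unfolding opt_cost_def
proof (rule Min_eqI)
  have "{Q. feasible_query (Vs k) (Es k) (Ds a b) w Q} \<subseteq> Pow (Vs k)"
    using feasD2 by blast
  then show "finite (card ` {Q. feasible_query (Vs k) (Es k) (Ds a b) w Q})"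
    by (intro finite_imageI) (auto intro: finite_subset simp: Vs_def)
next
  fix y assume "y \<in> card ` {Q. feasible_query (Vs k) (Es k) (Ds a b) w Q}"
  then obtain Q where F: "feasible_query (Vs k) (Es k) (Ds a b) w Q" and y: "y = card Q" by blast
  have QV: "Q \<subseteq> Vs k" using feasD2[OF F] .
  have fQ: "finite Q" using QV finite_subset by (auto simp: Vs_def)
  show "optf w \<le> y"
  proof (cases "w 0 \<in> IL")
    case True
    have L: "{1..k} \<subseteq> Q" using feasD[OF F] ok1 True by blast
    show ?thesis
    proof (cases "\<exists>i\<in>{1..k}. w i \<in> IC")
      case True2: True
      then obtain i where "i \<in> {1..k}" "w i \<in> IC" by blast
      then have "0 \<in> Q" using feasD[OF F] ok2 by blast
      have "Vs k \<subseteq> Q"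
      proof
        fix x assume "x \<in> Vs k"
        then show "x \<in> Q" using L \<open>0 \<in> Q\<close> by (cases "x = 0") (auto simp: Vs_def)
      qed
      then have "Q = Vs k" using QV by blast
      then show ?thesis using True True2 y by (simp add: optf_def Vs_def)
    next
      case False
      have "card {1..k} \<le> card Q" using L fQ by (rule card_mono[rotated])
      then show ?thesis using True False y by (simp add: optf_def)
    qed
  next
    case False
    have "ok w Q 1" using feasD[OF F] k by simp
    then have "Q \<noteq> {}" unfolding ok_def by blast
    then have "card Q \<ge> 1" using fQ by (simp add: Suc_le_eq card_gt_0_iff)
    then show ?thesis using False y by (simp add: optf_def)
  qed
next
  show "optf w \<in> card ` {Q. feasible_query (Vs k) (Es k) (Ds a b) w Q}"
  proof (cases "w 0 \<in> IL")
    case True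
    show ?thesis
    proof (cases "\<exists>i\<in>{1..k}. w i \<in> IC")
      case True2: True
      have "card (Vs k) = k + 1" by (simp add: Vs_def)
      then show ?thesis using True True2 feasV unfolding optf_def by (intro image_eqI[of _ _ "Vs k"]) auto
    next
      case False
      then show ?thesis using True feasL[of w] unfolding optf_def by (intro image_eqI[of _ _ "{1..k}"]) auto
    qed
  next
    case False
    then show ?thesis using feas0[of w] unfolding optf_def by (intro image_eqI[of _ _ "{0}"]) auto
  qed
qed

end


context star begin

abbreviation "P \<equiv> PiM (Vs k) (Ds a b)"

lemma probDs: "prob_space (Ds a b i)"
  using a b by (simp add: Ds_def prob_space_DC prob_space_DL)

lemma probP: "prob_space P"
  by (rule prob_space_PiM) (rule probDs)

lemma sets_Ds: "sets (Ds a b i) = sets borel"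
  by (simp add: Ds_def DC_def DL_def D2_def)

lemma comp:
  assumes i: "i \<in> Vs k" and B: "B \<in> sets borel"
  shows "measure P {w \<in> space P. w i \<in> B} = measure (Ds a b i) B"
proof -
  have "measure (Ds a b i) B = measure (distr P (Ds a b i) (\<lambda>w. w i)) B"
    using distr_PiM_component[of "Vs k" "Ds a b" i] probDs i by simp
  also have "\<dots> = measure P ((\<lambda>w. w i) -` B \<inter> space P)"
    by (rule measure_distr) (use i B sets_Ds in auto)
  also have "(\<lambda>w. w i) -` B \<inter> space P = {w \<in> space P. w i \<in> B}" by blast
  finally show ?thesis by simp
qed

lemma sets_IC: "IC \<in> sets borel" by (simp add: IC_def)
lemma sets_IL: "IL \<in> sets borel" by (simp add: IL_def)

lemma meas_w0: "measure P {w \<in> space P. w 0 \<in> IL} = 1 - a"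
  using comp[of 0 IL] sets_IL a by (simp add: Vs_def Ds_def prob_DC)

lemma meas_wi: "i \<in> {1..k} \<Longrightarrow> measure P {w \<in> space P. w i \<in> IC} = b"
  using comp[of i IC] sets_IC b by (simp add: Vs_def Ds_def prob_DL)

lemma mp_leaf: "j \<in> {1..k} \<Longrightarrow> mand_prob (Vs k) (Es k) (Ds a b) j = 1 - a"
  unfolding mand_prob_def realizations_def using mand_leaf meas_w0 by simp

lemma comp_meas: "i \<in> Vs k \<Longrightarrow> (\<lambda>w. w i) \<in> borel_measurable P"
proof -
  assume "i \<in> Vs k"
  then have "(\<lambda>w. w i) \<in> measurable P (Ds a b i)" by (rule measurable_component_singleton)
  then show ?thesis using measurable_cong_sets[OF refl sets_Ds] by metis
qed

lemma comp_set: "i \<in> Vs k \<Longrightarrow> B \<in> sets borel \<Longrightarrow> {w \<in> space P. w i \<in> B} \<in> sets P"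
proof -
  assume "i \<in> Vs k" "B \<in> sets borel"
  then have "(\<lambda>w. w i) -` B \<inter> space P \<in> sets P" using comp_meas by (intro measurable_sets) auto
  moreover have "(\<lambda>w. w i) -` B \<inter> space P = {w \<in> space P. w i \<in> B}" by blast
  ultimately show ?thesis by simp
qed

lemma set_center: "{w \<in> space P. \<exists>i\<in>{1..k}. w i \<in> IC} \<in> sets P"
proof -
  have "{w \<in> space P. \<exists>i\<in>{1..k}. w i \<in> IC} = (\<Union>i\<in>{1..k}. {w \<in> space P. w i \<in> IC})" by blast
  moreover have "(\<Union>i\<in>{1..k}. {w \<in> space P. w i \<in> IC}) \<in> sets P"
    using comp_set sets_IC by (intro sets.finite_UN) (auto simp: Vs_def)
  ultimately show ?thesis by simp
qed

lemma mp_center: "mand_prob (Vs k) (Es k) (Ds a b) 0 \<ge> b"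
proof -
  interpret prob_space P by (rule probP)
  have "measure P {w \<in> space P. w 1 \<in> IC} \<le> measure P {w \<in> space P. \<exists>i\<in>{1..k}. w i \<in> IC}"
    by (rule finite_measure_mono[OF _ set_center]) (use k in auto)
  then show ?thesis unfolding mand_prob_def realizations_def using mand_center meas_wi[of 1] k by simp
qed

end


context star begin

lemma optf_real: "(\<lambda>w. real (optf w)) = (\<lambda>w. if w 0 \<in> IL then (if \<exists>i\<in>{1..k}. w i \<in> IC then real k + 1 else real k) else 1)"
  by (auto simp: optf_def fun_eq_iff)

lemma set_w0: "{w \<in> space P. w 0 \<in> IL} \<in> sets P"
  using comp_set[of 0 IL] sets_IL by (simp add: Vs_def)

lemma optf_meas: "(\<lambda>w. real (optf w)) \<in> borel_measurable P"
  unfolding optf_real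
  by (intro measurable_If measurable_const set_w0 set_center) auto

lemma optf_int: "integrable P (\<lambda>w. real (optf w))"
proof -
  interpret prob_space P by (rule probP)
  show ?thesis
    by (rule integrable_const_bound[where B="real k + 1", OF _ optf_meas]) (auto simp: optf_def)
qed

lemma ind_int: "integrable P (\<lambda>w. 1 + real k * indicator {w \<in> space P. w 0 \<in> IL} w)"
proof -
  interpret prob_space P by (rule probP)
  show ?thesis
    by (intro Bochner_Integration.integrable_add Bochner_Integration.integrable_mult_right) (use set_w0 in \<open>auto simp: integrable_indicator_iff Int_absorb2 top.not_eq_extremum[symmetric] emeasure_finite\<close>)
qed

lemma EOPT_eq: "expected_opt (Vs k) (Es k) (Ds a b) = (\<integral>w. real (optf w) \<partial>P)"
  unfolding expected_opt_def realizations_def by (simp add: opt_eq)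

lemma EOPT_ub: "expected_opt (Vs k) (Es k) (Ds a b) \<le> 1 + real k * (1 - a)"
proof -
  interpret prob_space P by (rule probP)
  have "(\<integral>w. real (optf w) \<partial>P) \<le> (\<integral>w. 1 + real k * indicator {w \<in> space P. w 0 \<in> IL} w \<partial>P)"
    by (rule integral_mono[OF optf_int ind_int]) (auto simp: optf_def)
  also have "\<dots> = (\<integral>w. 1 \<partial>P) + (\<integral>w. real k * indicator {w \<in> space P. w 0 \<in> IL} w \<partial>P)"
    by (rule Bochner_Integration.integral_add) (use set_w0 in \<open>auto simp: integrable_indicator_iff Int_absorb2 top.not_eq_extremum[symmetric] emeasure_finite\<close>)
  also have "\<dots> = 1 + real k * measure P ({w \<in> space P. w 0 \<in> IL} \<inter> space P)"
    by (simp add: prob_space)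
  also have "{w \<in> space P. w 0 \<in> IL} \<inter> space P = {w \<in> space P. w 0 \<in> IL}" by blast
  also note meas_w0
  finally show ?thesis using EOPT_eq by simp
qed

lemma EOPT_lb: "expected_opt (Vs k) (Es k) (Ds a b) \<ge> 1"
proof -
  interpret prob_space P by (rule probP)
  have "(\<integral>w. 1 \<partial>P) \<le> (\<integral>w. real (optf w) \<partial>P)"
    by (rule integral_mono[OF _ optf_int]) (use k in \<open>auto simp: optf_def\<close>)
  then show ?thesis using EOPT_eq by (simp add: prob_space)
qed

end


lemma induced_simple: "simple_graph V E \<Longrightarrow> W \<subseteq> V \<Longrightarrow> simple_graph W (induced_edges E W)"
  unfolding simple_graph_def induced_edges_def
proof (intro conjI ballI)
  assume H: "finite V \<and> (\<forall>e\<in>E. \<exists>u v. e = {u, v} \<and> u \<noteq> v \<and> u \<in> V \<and> v \<in> V)" and W: "W \<subseteq> V"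
  then show "finite W" using finite_subset by blast
  fix e assume "e \<in> {e \<in> E. e \<subseteq> W}"
  then have e: "e \<in> E" "e \<subseteq> W" by auto
  then obtain u v where "e = {u,v}" "u \<noteq> v" using H by blast
  then show "\<exists>u v. e = {u, v} \<and> u \<noteq> v \<and> u \<in> W \<and> v \<in> W" using e(2) by blast
qed

lemma vc_sub: "exact_vc_alg vc \<Longrightarrow> simple_graph W F \<Longrightarrow> vc W F \<subseteq> W"
  unfolding exact_vc_alg_def is_min_vertex_cover_def is_vertex_cover_def by blast

lemma Sup_ge_eps:
  fixes S :: "ereal set"
  assumes "\<And>e. e > 0 \<Longrightarrow> \<exists>x\<in>S. ereal (c - e) \<le> x"
  shows "ereal c \<le> Sup S"
proof (rule ereal_le_epsilon2)
  fix e :: real assume "0 < e"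
  then obtain x where "x \<in> S" "ereal (c - e) \<le> x" using assms by blast
  then have "ereal (c - e) \<le> Sup S" by (meson Sup_upper order_trans)
  then have "ereal (c - e) + ereal e \<le> Sup S + ereal e" by (rule add_right_mono)
  then show "ereal c \<le> Sup S + ereal e" by simp
qed

context star begin

lemma simple: "simple_graph (Vs k) (Es k)"
  unfolding simple_graph_def
proof (intro conjI ballI)
  show "finite (Vs k)" by (simp add: Vs_def)
  fix e assume "e \<in> Es k"
  then obtain i where "i \<in> {1..k}" "e = {0,i}" unfolding Es_def by blast
  then show "\<exists>u v. e = {u, v} \<and> u \<noteq> v \<and> u \<in> Vs k \<and> v \<in> Vs k"
    by (intro exI[of _ 0] exI[of _ i]) (auto simp: Vs_def)
qed

lemma wf: "wf_instance (Vs k) (Es k) (Ds a b)"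
  unfolding wf_instance_def
proof (intro conjI ballI allI impI)
  show "simple_graph (Vs k) (Es k)" by (rule simple)
next
  fix v assume "v \<in> Vs k"
  show "prob_space (Ds a b v)" by (rule probDs)
  show "\<exists>f. f \<in> borel_measurable borel \<and> (\<forall>x. 0 \<le> f x) \<and> Ds a b v = density lborel (\<lambda>x. ennreal (f x))"
  proof (cases "v = 0")
    case True
    then show ?thesis using a
      by (intro exI[of _ "f2 a 0 2"]) (auto simp: Ds_def DC_def D2_def f2_nonneg)
  next
    case False
    then show ?thesis using b
      by (intro exI[of _ "f2 b 2 4"]) (auto simp: Ds_def DL_def D2_def f2_nonneg)
  qed
next
  fix u v assume "{u,v} \<in> Es k" "u \<noteq> v"
  then obtain i where i: "i \<in> {1..k}" "{u,v} = {0,i}" using edge_iff by blast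
  then have "(u = 0 \<and> v \<noteq> 0) \<or> (u \<noteq> 0 \<and> v = 0)" by (auto simp: doubleton_eq_iff)
  moreover have "(2.5::real) \<in> IC" "(2.5::real) \<in> IL" by (auto simp: IC_def IL_def)
  ultimately show "support_interval (Ds a b u) \<inter> support_interval (Ds a b v) \<noteq> {}"
    by (auto simp: supp_Ds)
qed

end



lemma in_ratio:
  assumes "wf_instance V E D" "0 < expected_opt V E D"
    "lp_optimal_bfs (V - thr_M d V E D) (induced_edges E (V - thr_M d V E D)) x"
  shows "ereal (thr_expected_cost vc d V E D x / expected_opt V E D) \<le> threshold_ratio vc d"
  unfolding threshold_ratio_def by (rule Sup_upper) (use assms in blast)

lemma fam1:
  assumes d: "0 < d" "d < 1" and vc: "exact_vc_alg vc" and k: "1 \<le> k"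
  shows "ereal ((real k + 1) / (1 + real k * d)) \<le> threshold_ratio vc d"
proof -
  interpret S: star "1 - d" d k using d k by unfold_locales auto
  let ?V = "Vs k" and ?E = "Es k" and ?D = "Ds (1 - d) d"
  have M: "thr_M d ?V ?E ?D = ?V"
  proof -
    have "mand_prob ?V ?E ?D v \<ge> d" if "v \<in> ?V" for v
    proof (cases "v = 0")
      case True then show ?thesis using S.mp_center by simp
    next
      case False then have "v \<in> {1..k}" using that by (auto simp: Vs_def)
      then show ?thesis using S.mp_leaf by simp
    qed
    then show ?thesis unfolding thr_M_def by blast
  qed
  define x :: "nat \<Rightarrow> real" where "x = (\<lambda>_. 0)"
  have ie: "induced_edges ?E {} = {}" unfolding induced_edges_def Es_def by auto
  have bfs: "lp_optimal_bfs (?V - thr_M d ?V ?E ?D) (induced_edges ?E (?V - thr_M d ?V ?E ?D)) x"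
    unfolding M using ie by (simp add: lp_optimal_bfs_def lp_feasible_def lp_basic_def x_def fun_eq_iff)
  have sg: "simple_graph {} (induced_edges ?E {})" using induced_simple[OF S.simple] by simp
  have Q: "thr_Q vc d ?V ?E ?D x = ?V"
    unfolding thr_Q_def Let_def M using vc_sub[OF vc sg] by (auto simp: x_def)
  have cost: "thr_expected_cost vc d ?V ?E ?D x = real k + 1"
  proof -
    have c: "card ?V = k + 1" by (simp add: Vs_def)
    show ?thesis unfolding thr_expected_cost_def Let_def Q realizations_def
      by (simp add: c prob_space.prob_space[OF S.probP])
  qed
  have ub: "expected_opt ?V ?E ?D \<le> 1 + real k * d" using S.EOPT_ub by simp
  have lb: "expected_opt ?V ?E ?D \<ge> 1" by (rule S.EOPT_lb)
  have "(real k + 1) / (1 + real k * d) \<le> (real k + 1) / expected_opt ?V ?E ?D"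
    using ub lb by (intro divide_left_mono) auto
  also have "ereal \<dots> \<le> threshold_ratio vc d"
    unfolding cost[symmetric] using S.wf lb bfs by (intro in_ratio) auto
  finally show ?thesis by simp
qed

lemma fam2:
  assumes d: "0 < d" "d \<le> 1" and vc: "exact_vc_alg vc"
    and q: "0 < q" "q < d" and r: "0 < r" "r < d"
  shows "ereal ((1 + q) / (1 + r)) \<le> threshold_ratio vc d"
proof -
  interpret S: star "1 - r" q 1 using d q r by unfold_locales auto
  let ?V = "Vs 1" and ?E = "Es 1" and ?D = "Ds (1 - r) q"
  have V: "?V = {0,1}" by (auto simp: Vs_def)
  have E: "?E = {{0,1}}" by (auto simp: Es_def)
  have mp0: "mand_prob ?V ?E ?D 0 = q"
  proof -
    have "{w \<in> space S.P. mandatory ?V ?E ?D w 0} = {w \<in> space S.P. w 1 \<in> IC}"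
      using S.mand_center by auto
    then show ?thesis unfolding mand_prob_def realizations_def using S.meas_wi[of 1] by simp
  qed
  have mp1: "mand_prob ?V ?E ?D 1 = r" using S.mp_leaf[of 1] by simp
  have M: "thr_M d ?V ?E ?D = {}"
  proof -
    have "\<not> mand_prob ?V ?E ?D v \<ge> d" if "v \<in> ?V" for v
    proof -
      have "v = 0 \<or> v = 1" using that V by auto
      then show ?thesis using mp0 mp1 q r by auto
    qed
    then show ?thesis unfolding thr_M_def by blast
  qed
  define x :: "nat \<Rightarrow> real" where "x = (\<lambda>v. if v = 1 then 1 else 0)"
  have ie: "induced_edges ?E ?V = ?E" unfolding induced_edges_def E V by auto
  have bfs: "lp_optimal_bfs ?V ?E x"
    unfolding lp_optimal_bfs_def
  proof (intro conjI allI impI)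
    show "lp_feasible ?V ?E x"
      unfolding lp_feasible_def V E x_def by (auto simp: doubleton_eq_iff)
    show "lp_basic ?V ?E x"
      unfolding lp_basic_def
    proof (intro allI impI)
      fix y :: "nat \<Rightarrow> real"
      assume H: "(\<forall>v. v \<notin> ?V \<longrightarrow> y v = 0) \<and> (\<forall>v\<in>?V. x v = 0 \<longrightarrow> y v = 0) \<and>
       (\<forall>u v. {u, v} \<in> ?E \<longrightarrow> u \<noteq> v \<longrightarrow> x u + x v = 1 \<longrightarrow> y u + y v = 1)"
      have H2: "\<forall>v\<in>?V. x v = 0 \<longrightarrow> y v = 0" using H by blast
      have "(0::nat) \<in> ?V" by (simp add: Vs_def)
      then have y0: "y 0 = 0" using H2 by (simp add: x_def)
      have H3: "\<forall>u v. {u, v} \<in> ?E \<longrightarrow> u \<noteq> v \<longrightarrow> x u + x v = 1 \<longrightarrow> y u + y v = 1" using H by blast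
      have "{0::nat,1} \<in> ?E" unfolding Es_def by (rule imageI) simp
      then have "y 0 + y 1 = 1" using H3 by (simp add: x_def)
      then have y1: "y 1 = 1" using y0 by simp
      show "y = x"
      proof
        fix v show "y v = x v"
        proof (cases "v \<in> ?V")
          case True then have "v = 0 \<or> v = 1" using V by auto
          then show ?thesis using y0 y1 by (auto simp: x_def)
        next
          case False then have "v \<noteq> 1" by (auto simp: Vs_def)
          then show ?thesis using H False by (simp add: x_def)
        qed
      qed
    qed
  next
    fix y assume "lp_feasible ?V ?E y"
    then have "y 0 + y 1 \<ge> 1" unfolding lp_feasible_def E by auto
    then show "(\<Sum>v\<in>?V. x v) \<le> (\<Sum>v\<in>?V. y v)" by (simp add: Vs_def atLeast0_atMost_Suc x_def)
  qed
  have bfs': "lp_optimal_bfs (?V - thr_M d ?V ?E ?D) (induced_edges ?E (?V - thr_M d ?V ?E ?D)) x"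
    unfolding M Diff_empty ie by (rule bfs)
  have Vh: "{v \<in> ?V. x v = 1/2} = {}" by (auto simp: x_def)
  have V1: "{v \<in> ?V. x v = 1} = {1}" by (auto simp: x_def Vs_def)
  have sg: "simple_graph {} (induced_edges ?E {})" using induced_simple[OF S.simple] by simp
  have Q: "thr_Q vc d ?V ?E ?D x = {1}"
    unfolding thr_Q_def Let_def M Diff_empty Vh V1 using vc_sub[OF vc sg] by auto
  have cost: "thr_expected_cost vc d ?V ?E ?D x = 1 + q"
  proof -
    have FM: "finite_measure S.P" by (rule prob_space.finite_measure[OF S.probP])
    have "(\<integral>w. real (card {1::nat} + card {v \<in> ?V - {1}. mandatory ?V ?E ?D w v}) \<partial>S.P)
        = (\<integral>w. 1 + indicator {w \<in> space S.P. w 1 \<in> IC} w \<partial>S.P)"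
    proof (rule Bochner_Integration.integral_cong[OF refl])
      fix w assume w: "w \<in> space S.P"
      have "?V - {1} = {0}" by (auto simp: Vs_def)
      then have "{v \<in> ?V - {1}. mandatory ?V ?E ?D w v} = (if w 1 \<in> IC then {0} else {})"
        using S.mand_center[of w] by auto
      then show "real (card {1::nat} + card {v \<in> ?V - {1}. mandatory ?V ?E ?D w v})
          = 1 + indicator {w \<in> space S.P. w 1 \<in> IC} w" using w by (auto simp: indicator_def)
    qed
    also have "\<dots> = 1 + q"
    proof -
      have s: "{w \<in> space S.P. w 1 \<in> IC} \<in> sets S.P" using S.comp_set[of 1 IC] S.sets_IC by (simp add: Vs_def)
      have i1: "integrable S.P (\<lambda>w. 1::real)" by (rule finite_measure.integrable_const[OF FM])
      have sp: "{w \<in> space S.P. w 1 \<in> IC} \<inter> space S.P = {w \<in> space S.P. w 1 \<in> IC}" by blast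
      have i2: "integrable S.P (indicator {w \<in> space S.P. w 1 \<in> IC} :: _ \<Rightarrow> real)"
        unfolding integrable_indicator_iff sp
      proof (rule conjI)
        show "{w \<in> space S.P. w 1 \<in> IC} \<in> sets S.P" by (fact s)
        show "emeasure S.P {w \<in> space S.P. w 1 \<in> IC} < \<infinity>"
          using finite_measure.emeasure_finite[OF FM, of "{w \<in> space S.P. w 1 \<in> IC}"]
          by (simp add: top.not_eq_extremum[symmetric])
      qed
      have "(\<integral>w. (1::real) + indicator {w \<in> space S.P. w 1 \<in> IC} w \<partial>S.P)
          = (\<integral>w. 1 \<partial>S.P) + (\<integral>w. indicator {w \<in> space S.P. w 1 \<in> IC} w \<partial>S.P)"
        using Bochner_Integration.integral_add[OF i1 i2] by simp
      also have "\<dots> = 1 + measure S.P ({w \<in> space S.P. w 1 \<in> IC} \<inter> space S.P)"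
        unfolding lebesgue_integral_const integral_indicator prob_space.prob_space[OF S.probP] by simp
      also have "{w \<in> space S.P. w 1 \<in> IC} \<inter> space S.P = {w \<in> space S.P. w 1 \<in> IC}" by blast
      also have "measure S.P {w \<in> space S.P. w 1 \<in> IC} = q" using S.meas_wi[of 1] by simp
      finally show ?thesis .
    qed
    finally show ?thesis unfolding thr_expected_cost_def Let_def Q realizations_def .
  qed
  have ub: "expected_opt ?V ?E ?D \<le> 1 + r" using S.EOPT_ub by simp
  have lb: "expected_opt ?V ?E ?D \<ge> 1" by (rule S.EOPT_lb)
  have "(1 + q) / (1 + r) \<le> (1 + q) / expected_opt ?V ?E ?D"
    using ub lb q by (intro divide_left_mono) auto
  also have "ereal \<dots> \<le> threshold_ratio vc d"
    unfolding cost[symmetric] using S.wf lb bfs' by (intro in_ratio) auto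
  finally show ?thesis by simp
qed



lemma ereal_le_eps:
  fixes T :: ereal
  assumes "\<And>e. e > 0 \<Longrightarrow> ereal (c - e) \<le> T"
  shows "ereal c \<le> T"
proof (rule ereal_le_epsilon2)
  fix e :: real assume "0 < e"
  then have "ereal (c - e) + ereal e \<le> T + ereal e" using assms by (intro add_right_mono) auto
  then show "ereal c \<le> T + ereal e" by simp
qed

lemma lb1:
  assumes d: "0 < d" "d \<le> 1" and vc: "exact_vc_alg vc"
  shows "ereal (1 + d) \<le> threshold_ratio vc d"
proof (rule ereal_le_eps)
  fix e :: real assume e: "e > 0"
  define \<delta> where "\<delta> = min (e/4) (d/2)"
  have \<delta>: "0 < \<delta>" "\<delta> \<le> e/4" "\<delta> \<le> d/2" using e d by (auto simp: \<delta>_def)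
  have fam: "ereal ((1 + (d - \<delta>)) / (1 + \<delta>)) \<le> threshold_ratio vc d"
    using d \<delta> by (intro fam2[OF d vc]) auto
  have m1: "d * \<delta> \<le> 1 * \<delta>" using d \<delta> by (intro mult_right_mono) auto
  have m2: "0 \<le> e * \<delta>" using e \<delta> by simp
  have ex: "(1 + d - e) * (1 + \<delta>) = 1 + d - e + \<delta> + d * \<delta> - e * \<delta>" by (simp add: algebra_simps)
  have "(1 + d - e) * (1 + \<delta>) \<le> 1 + (d - \<delta>)"
    unfolding ex using m1 m2 \<delta> by linarith
  then have "1 + d - e \<le> (1 + (d - \<delta>)) / (1 + \<delta>)" using \<delta> by (simp add: le_divide_eq)
  then show "ereal (1 + d - e) \<le> threshold_ratio vc d" using fam order_trans by (metis ereal_less_eq(3))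
qed

lemma lb2:
  assumes d: "0 < d" "d < 1" and vc: "exact_vc_alg vc"
  shows "ereal (1 / d) \<le> threshold_ratio vc d"
proof (rule ereal_le_eps)
  fix e :: real assume e: "e > 0"
  define k where "k = nat \<lceil>(1 - d) / (d * d * e)\<rceil> + 1"
  define K where "K = real k"
  have k1: "1 \<le> k" by (simp add: k_def)
  have K1: "(1 - d) / (d * d * e) \<le> K" unfolding K_def k_def
    using real_nat_ceiling_ge[of "(1 - d) / (d * d * e)"] by simp
  have dde: "0 < d * d * e" using d e by simp
  have h0: "1 - d \<le> K * (d * d * e)" using K1 dde by (simp add: pos_divide_le_eq)
  have h1: "(1 - d) / d \<le> K * d * e" using h0 d by (simp add: pos_divide_le_eq algebra_simps)
  have h2: "1 / d - 1 = (1 - d) / d" using d by (simp add: field_simps)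
  have h3: "(1 / d - e) * (1 + K * d) = 1 / d + K - e - e * K * d" using d by (simp add: field_simps)
  have Kpos: "0 \<le> K" by (simp add: K_def)
  have h4: "0 \<le> e" using e by simp
  have h5: "e * K * d = K * d * e" by simp
  have "(1 / d - e) * (1 + K * d) \<le> K + 1" using h1 h2 h3 h4 h5 by linarith
  moreover have "0 < 1 + K * d" using Kpos d by (simp add: add_pos_nonneg)
  ultimately have "1 / d - e \<le> (K + 1) / (1 + K * d)" by (simp add: le_divide_eq)
  moreover have "ereal ((real k + 1) / (1 + real k * d)) \<le> threshold_ratio vc d"
    by (rule fam1[OF d vc k1])
  ultimately show "ereal (1 / d - e) \<le> threshold_ratio vc d" unfolding K_def
    by (metis ereal_less_eq(3) order_trans)
qed

theorem theoremB2:
  fixes d :: real and vc :: "nat set \<Rightarrow> nat set set \<Rightarrow> nat set"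
  assumes "0 < d" and "d \<le> 1" and "exact_vc_alg vc"
  shows "threshold_ratio vc d \<ge> ereal (max (1 + d) (1 / d)) \<and>
         threshold_ratio vc d \<ge> ereal ((1 + sqrt 5) / 2)"
proof -
  have A: "ereal (1 + d) \<le> threshold_ratio vc d" by (rule lb1[OF assms])
  have B: "ereal (1 / d) \<le> threshold_ratio vc d"
  proof (cases "d < 1")
    case True then show ?thesis using lb2 assms by blast
  next
    case False then have "d = 1" using assms by simp
    then have "ereal (1 / d) \<le> ereal (1 + d)" by simp
    then show ?thesis using A by (rule order_trans)
  qed
  have C: "ereal (max (1 + d) (1 / d)) \<le> threshold_ratio vc d"
    using A B by (cases "1 + d \<le> 1 / d") (auto simp: max_def)
  have phi: "(1 + sqrt 5) / 2 \<le> max (1 + d) (1 / d)"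
  proof (cases "(1 + sqrt 5) / 2 \<le> 1 + d")
    case True then show ?thesis using max.cobounded1 order_trans by blast
  next
    case False
    then have dl: "d < (sqrt 5 - 1) / 2" by simp
    have s5: "sqrt 5 * sqrt 5 = 5" by simp
    have sp: "0 < (1 + sqrt 5) / 2" by (simp add: add_pos_nonneg)
    have "d * ((1 + sqrt 5) / 2) < (sqrt 5 - 1) / 2 * ((1 + sqrt 5) / 2)"
      by (rule mult_strict_right_mono[OF dl sp])
    also have "\<dots> = 1" using s5 by (simp add: field_simps)
    finally have "(1 + sqrt 5) / 2 < 1 / d" using assms(1) by (simp add: less_divide_eq mult.commute)
    then show ?thesis using max.cobounded2 by (meson less_imp_le order_trans)
  qed
  have D: "ereal ((1 + sqrt 5) / 2) \<le> threshold_ratio vc d"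
    using C phi by (metis ereal_less_eq(3) order_trans)
  show ?thesis using C D by simp
qed


end
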